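(* Let $X(0),X(1),\dots$ be i.i.d. real random variables with $|X(0)|\le D$ a.s. Let $q_1,\dots,q_\ell$ be nonnegative, strictly increasing, integer-valued functions on the nonnegative integers such that for some $\gamma\in(0,1)$ and $n_0\in\mathbb Z$, $q_{j+1}([n^\gamma])>q_j(n)$ for all $n\ge n_0$ and $j=1,\dots,\ell-1$. Let $S_N=\sum_{n=0}^NX(q_1(n))\cdots X(q_\ell(n))$ and $M_N(t)=E\exp(tS_N)$. Then for every real $t$ the limit $\eta(t)=\lim_{N\to\infty}\frac1N\log M_N(t)$ exists and equals $\log\sum_{k=0}^\infty\frac{t^k}{k!}\big(EX^k(0)\big)^\ell$; $\eta$ is differentiable; and with $\Lambda(x)=\sup_t(tx-\eta(t))$ and $Q_N(U)=\frac1N\log P\{\frac1NS_N\in U\}$ one has $\limsup_{N\to\infty}Q_N(F)\le-\inf_{x\in F}\Lambda(x)$ for every closed $F\subset\mathbb R$ and $\liminf_{N\to\infty}Q_N(G)\ge-\inf_{x\in G}\Lambda(x)$ for every open $G\subset\mathbb R$.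
   Context: $[\cdot]$ denotes the integer part. *)

theory Defs
  imports "HOL-Probability.Probability"
begin

definition S_sum :: "(nat \<Rightarrow> nat \<Rightarrow> nat) \<Rightarrow> nat \<Rightarrow> (nat \<Rightarrow> 'a \<Rightarrow> real) \<Rightarrow> nat \<Rightarrow> 'a \<Rightarrow> real" where
  "S_sum q l X N \<omega> = (\<Sum>n=0..N. \<Prod>j=1..l. X (q j n) \<omega>)"

definition mgf_S :: "'a measure \<Rightarrow> (nat \<Rightarrow> nat \<Rightarrow> nat) \<Rightarrow> nat \<Rightarrow> (nat \<Rightarrow> 'a \<Rightarrow> real) \<Rightarrow> nat \<Rightarrow> real \<Rightarrow> real" where
  "mgf_S M q l X N t = (\<integral>\<omega>. exp (t * S_sum q l X N \<omega>) \<partial>M)"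

definition eta_fun :: "'a measure \<Rightarrow> (nat \<Rightarrow> 'a \<Rightarrow> real) \<Rightarrow> nat \<Rightarrow> real \<Rightarrow> real" where
  "eta_fun M X l t = ln (\<Sum>k. t ^ k / fact k * (\<integral>\<omega>. X 0 \<omega> ^ k \<partial>M) ^ l)"

definition Lambda_fun :: "(real \<Rightarrow> real) \<Rightarrow> real \<Rightarrow> ereal" where
  "Lambda_fun \<eta> x = (SUP t. ereal (t * x - \<eta> t))"

definition Q_fun :: "'a measure \<Rightarrow> (nat \<Rightarrow> 'a \<Rightarrow> real) \<Rightarrow> nat \<Rightarrow> real set \<Rightarrow> ereal" where
  "Q_fun M S N U =
     (let p = measure M {\<omega> \<in> space M. S N \<omega> / real N \<in> U}
      in if p = 0 then - \<infinity> else ereal (ln p / real N))"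

end

theory Submission
  imports Defs
begin


locale ldp_setting = prob_space M for M :: "'a measure" +
  fixes S :: "nat \<Rightarrow> 'a \<Rightarrow> real" and \<eta> :: "real \<Rightarrow> real"
  assumes S_meas[measurable]: "\<And>N. S N \<in> borel_measurable M"
  and S_int: "\<And>N t. integrable M (\<lambda>\<omega>. exp (t * S N \<omega>))"
  and lim: "\<And>t. (\<lambda>N. ln (\<integral>\<omega>. exp (t * S N \<omega>) \<partial>M) / real N) \<longlonglongrightarrow> \<eta> t"
begin

definition mg :: "nat \<Rightarrow> real \<Rightarrow> real" where
  "mg N t = (\<integral>\<omega>. exp (t * S N \<omega>) \<partial>M)"

lemma mg_pos: "mg N t > 0"
proof -
  have ge: "mg N t \<ge> 0" unfolding mg_def by (intro integral_nonneg_AE) auto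
  have "mg N t \<noteq> 0"
  proof
    assume "mg N t = 0"
    then have "AE \<omega> in M. exp (t * S N \<omega>) = 0"
      unfolding mg_def using integral_nonneg_eq_0_iff_AE[OF S_int] by auto
    then have "AE \<omega> in M. False" by simp
    then show False by simp
  qed
  with ge show ?thesis by simp
qed

lemma lim_mg: "(\<lambda>N. ln (mg N t) / real N) \<longlonglongrightarrow> \<eta> t"
  using lim[of t] unfolding mg_def .

lemma eta0: "\<eta> 0 = 0"
proof -
  have "(\<lambda>N. ln (mg N 0) / real N) \<longlonglongrightarrow> 0"
    by (simp add: mg_def prob_space)
  from LIMSEQ_unique[OF lim_mg this] show ?thesis .
qed

lemma markov_aux:
  assumes A: "A \<in> sets M" and g: "integrable M g" and nn: "\<And>\<omega>. \<omega> \<in> space M \<Longrightarrow> 0 \<le> g \<omega>"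
    and one: "\<And>\<omega>. \<omega> \<in> A \<Longrightarrow> 1 \<le> g \<omega>"
  shows "measure M A \<le> (\<integral>\<omega>. g \<omega> \<partial>M)"
proof -
  have "measure M A = (\<integral>\<omega>. indicator A \<omega> \<partial>M)"
    using A sets.sets_into_space[OF A] by (simp add: integral_indicator Int_absorb2)
  also have "\<dots> \<le> (\<integral>\<omega>. g \<omega> \<partial>M)"
  proof (rule integral_mono)
    show "integrable M (indicator A :: 'a \<Rightarrow> real)" using A by (intro integrable_real_indicator) (auto simp: less_top[symmetric])
    show "integrable M g" by fact
    fix \<omega> assume "\<omega> \<in> space M"
    then show "(indicator A \<omega> :: real) \<le> g \<omega>"
      using nn one by (auto simp: indicator_def)
  qed
  finally show ?thesis .
qed

lemma chernoff_up:
  assumes N: "N > 0" and t: "t \<ge> 0"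
  shows "measure M {\<omega> \<in> space M. a \<le> S N \<omega> / real N} \<le> exp (- t * real N * a) * mg N t"
proof -
  have "measure M {\<omega> \<in> space M. a \<le> S N \<omega> / real N} \<le> (\<integral>\<omega>. exp (- t * real N * a) * exp (t * S N \<omega>) \<partial>M)"
  proof (rule markov_aux)
    show "{\<omega> \<in> space M. a \<le> S N \<omega> / real N} \<in> sets M" by measurable
    show "integrable M (\<lambda>\<omega>. exp (- t * real N * a) * exp (t * S N \<omega>))"
      using S_int by simp
    fix \<omega> assume "\<omega> \<in> {\<omega> \<in> space M. a \<le> S N \<omega> / real N}"
    then have "real N * a \<le> S N \<omega>" using N by (simp add: field_simps)
    then have "0 \<le> t * S N \<omega> - t * real N * a" using t
      by (metis diff_ge_0_iff_ge mult.assoc mult_left_mono)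
    then have "1 \<le> exp (t * S N \<omega> - t * real N * a)" by simp
    then show "1 \<le> exp (- t * real N * a) * exp (t * S N \<omega>)"
      by (simp add: exp_add[symmetric])
  qed simp
  also have "\<dots> = exp (- t * real N * a) * mg N t" by (simp add: mg_def)
  finally show ?thesis .
qed

lemma upper_one_sided:
  assumes m: "\<And>t. t * m \<le> \<eta> t" and am: "m \<le> a" and c: "0 < c'" and ct: "c' < t * a - \<eta> t"
    and e: "0 < e"
  shows "eventually (\<lambda>N. measure M {\<omega> \<in> space M. a \<le> S N \<omega> / real N} \<le> exp (real N * (e - c'))) sequentially"
proof -
  have t: "t \<ge> 0"
  proof (rule ccontr)
    assume "\<not> t \<ge> 0"
    then have "t * a \<le> t * m" using am by (simp add: mult_left_mono_neg)
    then show False using m[of t] ct c by linarith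
  qed
  have ev1: "eventually (\<lambda>N. ln (mg N t) / real N < \<eta> t + e) sequentially"
    using lim_mg[of t] e by (intro order_tendstoD) auto
  have ev2: "eventually (\<lambda>N. N > (0::nat)) sequentially" by (rule eventually_gt_at_top)
  show ?thesis using ev1 ev2
  proof eventually_elim
    case (elim N)
    then have "ln (mg N t) < real N * (\<eta> t + e)" by (simp add: field_simps)
    then have "mg N t < exp (real N * (\<eta> t + e))"
      using mg_pos by (metis exp_less_mono exp_ln)
    then have "exp (- t * real N * a) * mg N t \<le> exp (- t * real N * a) * exp (real N * (\<eta> t + e))"
      by simp
    also have "\<dots> = exp (real N * (\<eta> t + e - t * a))"
      by (simp add: exp_add[symmetric] algebra_simps)
    also have "\<dots> \<le> exp (real N * (e - c'))"
      using ct by (intro exp_mono mult_left_mono) auto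
    finally show ?case using chernoff_up[OF elim(2) t, of a] by linarith
  qed
qed

lemma neg_setting: "ldp_setting M (\<lambda>N \<omega>. - S N \<omega>) (\<lambda>t. \<eta> (-t))"
proof unfold_locales
  fix N t show "integrable M (\<lambda>\<omega>. exp (t * - S N \<omega>))" using S_int[where N=N and t="-t"] by simp
next
  fix t show "(\<lambda>N. ln (\<integral>\<omega>. exp (t * - S N \<omega>) \<partial>M) / real N) \<longlonglongrightarrow> \<eta> (- t)"
    using lim[of "-t"] by simp
qed simp

lemma lower_one_sided:
  assumes m: "\<And>t. t * m \<le> \<eta> t" and am: "b \<le> m" and c: "0 < c'" and ct: "c' < t * b - \<eta> t"
    and e: "0 < e"
  shows "eventually (\<lambda>N. measure M {\<omega> \<in> space M. S N \<omega> / real N \<le> b} \<le> exp (real N * (e - c'))) sequentially"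
proof -
  have "eventually (\<lambda>N. measure M {\<omega> \<in> space M. - b \<le> - S N \<omega> / real N} \<le> exp (real N * (e - c'))) sequentially"
  proof (rule ldp_setting.upper_one_sided[OF neg_setting, where m="-m" and a="-b" and c'=c' and t="-t" and e=e])
    fix t show "t * - m \<le> \<eta> (- t)" using m[of "-t"] by simp
  qed (use am c ct e in auto)
  then show ?thesis by simp
qed

lemma ev_real_gt: "eventually (\<lambda>N. K < real N) sequentially"
proof -
  obtain n where "K < real n" using reals_Archimedean2 by blast
  then show ?thesis unfolding eventually_sequentially
    by (intro exI[of _ n]) (auto intro: less_le_trans)
qed

lemma Q_le:
  assumes N: "N > 0" and p: "measure M {\<omega> \<in> space M. S N \<omega> / real N \<in> U} \<le> exp (real N * (- c))"
  shows "Q_fun M S N U \<le> ereal (- c)"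
proof -
  define p where "p = measure M {\<omega> \<in> space M. S N \<omega> / real N \<in> U}"
  show ?thesis
  proof (cases "p = 0")
    case True then show ?thesis by (simp add: Q_fun_def p_def[symmetric])
  next
    case False
    then have pp: "p > 0" using measure_nonneg[of M] p_def by (metis less_eq_real_def)
    have "ln p \<le> real N * (- c)" using p pp unfolding p_def[symmetric]
      by (metis ln_exp ln_le_cancel_iff exp_gt_zero)
    then have "ln p / real N \<le> - c" using N by (simp add: field_simps)
    then show ?thesis using False by (simp add: Q_fun_def p_def[symmetric])
  qed
qed

theorem upper_bound:
  assumes m: "\<And>t. t * m \<le> \<eta> t" and F: "closed F"
  shows "limsup (\<lambda>N. Q_fun M S N F) \<le> - (INF x\<in>F. Lambda_fun \<eta> x)"
proof -
  define L where "L = (INF x\<in>F. Lambda_fun \<eta> x)"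
  define A where "A U N = {\<omega> \<in> space M. S N \<omega> / real N \<in> U}" for U N
  have A_sets[measurable]: "A U N \<in> sets M" if "U \<in> sets borel" for U N
    unfolding A_def using that by measurable
  have key: "eventually (\<lambda>N. Q_fun M S N F \<le> ereal (-c)) sequentially" if cL: "ereal c < L" for c
  proof (cases "c < 0")
    case True
    show ?thesis using eventually_gt_at_top[of 0]
    proof eventually_elim
      case (elim N)
      have "measure M {\<omega> \<in> space M. S N \<omega> / real N \<in> F} \<le> 1" by simp
      also have "1 \<le> exp (real N * (- c))" using True by (simp add: mult_nonneg_nonpos less_imp_le)
      finally show ?case by (rule Q_le[OF elim])
    qed
  next
    case False
    then have c0: "0 \<le> c" by simp
    obtain c' where c': "ereal c < ereal c'" "ereal c' < L" using ereal_dense2[OF cL] by blast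
    then have cc': "c < c'" by simp
    define e where "e = (c' - c) / 2"
    have e0: "0 < e" using cc' by (simp add: e_def)
    have Fb: "F \<in> sets borel" using F by (simp add: borel_closed)
    define U where "U = F \<inter> {m..}"
    define V where "V = F \<inter> {..m}"
    have Ub: "U \<in> sets borel" "V \<in> sets borel" using Fb by (auto simp: U_def V_def)
    have evU: "eventually (\<lambda>N. measure M (A U N) \<le> exp (real N * (e - c'))) sequentially"
    proof (cases "U = {}")
      case True then show ?thesis by (simp add: A_def)
    next
      case False
      define a where "a = Inf U"
      have bU: "bdd_below U" unfolding U_def by (auto intro!: bdd_belowI[of _ m])
      have aU: "a \<in> U" unfolding a_def
        using closed_contains_Inf[OF False bU] F by (simp add: U_def closed_Int)
      then have "L \<le> Lambda_fun \<eta> a" unfolding L_def U_def by (auto intro: INF_lower)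
      with c' have "ereal c' < (SUP t. ereal (t * a - \<eta> t))" by (simp add: Lambda_fun_def)
      then obtain t where t: "c' < t * a - \<eta> t" by (auto simp: less_SUP_iff)
      have am: "m \<le> a" using aU by (simp add: U_def)
      have c'0: "0 < c'" using c0 cc' by simp
      show ?thesis using upper_one_sided[OF m am c'0 t e0]
      proof eventually_elim
        case (elim N)
        have "A U N \<subseteq> {\<omega> \<in> space M. a \<le> S N \<omega> / real N}"
          unfolding A_def a_def using bU by (auto intro: cInf_lower)
        then have "measure M (A U N) \<le> measure M {\<omega> \<in> space M. a \<le> S N \<omega> / real N}"
          by (intro finite_measure_mono) measurable
        with elim show ?case by simp
      qed
    qed
    have evV: "eventually (\<lambda>N. measure M (A V N) \<le> exp (real N * (e - c'))) sequentially"
    proof (cases "V = {}")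
      case True then show ?thesis by (simp add: A_def)
    next
      case False
      define b where "b = Sup V"
      have bV: "bdd_above V" unfolding V_def by (auto intro!: bdd_aboveI[of _ m])
      have bVV: "b \<in> V" unfolding b_def
        using closed_contains_Sup[OF False bV] F by (simp add: V_def closed_Int)
      then have "L \<le> Lambda_fun \<eta> b" unfolding L_def V_def by (auto intro: INF_lower)
      with c' have "ereal c' < (SUP t. ereal (t * b - \<eta> t))" by (simp add: Lambda_fun_def)
      then obtain t where t: "c' < t * b - \<eta> t" by (auto simp: less_SUP_iff)
      have bm: "b \<le> m" using bVV by (simp add: V_def)
      have c'0: "0 < c'" using c0 cc' by simp
      show ?thesis using lower_one_sided[OF m bm c'0 t e0]
      proof eventually_elim
        case (elim N)
        have "A V N \<subseteq> {\<omega> \<in> space M. S N \<omega> / real N \<le> b}"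
          unfolding A_def b_def using bV by (auto intro: cSup_upper)
        then have "measure M (A V N) \<le> measure M {\<omega> \<in> space M. S N \<omega> / real N \<le> b}"
          by (intro finite_measure_mono) measurable
        with elim show ?case by simp
      qed
    qed
    show ?thesis using evU evV eventually_gt_at_top[of 0] ev_real_gt[of "ln 2 / e"]
    proof eventually_elim
      case (elim N)
      have "A F N \<subseteq> A U N \<union> A V N" by (auto simp: A_def U_def V_def)
      then have "measure M (A F N) \<le> measure M (A U N \<union> A V N)"
        using Ub by (intro finite_measure_mono) auto
      also have "\<dots> \<le> measure M (A U N) + measure M (A V N)"
        using Ub by (intro measure_Un_le) auto
      also have "\<dots> \<le> 2 * exp (real N * (e - c'))" using elim by simp
      also have "\<dots> \<le> exp (real N * e) * exp (real N * (e - c'))"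
      proof -
        have "ln 2 \<le> real N * e" using elim(4) e0 by (simp add: field_simps)
        then have "2 \<le> exp (real N * e)" by (metis exp_le_cancel_iff exp_ln zero_less_numeral)
        then show ?thesis by simp
      qed
      also have "\<dots> = exp (real N * (- c))" by (simp add: exp_add[symmetric] e_def algebra_simps)
      finally show ?case by (intro Q_le[OF elim(3)]) (simp add: A_def)
    qed
  qed
  show ?thesis unfolding L_def[symmetric]
  proof (rule ccontr)
    assume "\<not> limsup (\<lambda>N. Q_fun M S N F) \<le> - L"
    then have "- limsup (\<lambda>N. Q_fun M S N F) < L" by (simp add: ereal_uminus_less_reorder not_le)
    then obtain c where c: "- limsup (\<lambda>N. Q_fun M S N F) < ereal c" "ereal c < L"
      using ereal_dense2 by blast
    have "limsup (\<lambda>N. Q_fun M S N F) \<le> ereal (- c)"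
      using key[OF c(2)] by (intro Limsup_bounded) auto
    then show False using c(1) by (simp add: ereal_uminus_less_reorder)
  qed
qed

lemma pw_bound:
  fixes x N s r t0 y :: real
  assumes N: "N > 0" and s: "s > 0" and r: "r > 0"
  shows "exp (t0 * x) \<le> (if x / N \<in> {y-r<..<y+r} then 1 else 0) * exp (N * (t0 * y + \<bar>t0\<bar> * r))
          + exp (- s * N * (y + r)) * exp ((t0 + s) * x) + exp (s * N * (y - r)) * exp ((t0 - s) * x)"
proof -
  have nn1: "0 \<le> (if x / N \<in> {y-r<..<y+r} then 1 else 0) * exp (N * (t0 * y + \<bar>t0\<bar> * r))" by simp
  have nn2: "0 \<le> exp (- s * N * (y + r)) * exp ((t0 + s) * x)" by simp
  have nn3: "0 \<le> exp (s * N * (y - r)) * exp ((t0 - s) * x)" by simp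
  have xN: "x = N * (x / N)" using N by simp
  consider "x / N \<in> {y-r<..<y+r}" | "y + r \<le> x / N" | "x / N \<le> y - r" by fastforce
  then show ?thesis
  proof cases
    case 1
    then have "\<bar>x / N - y\<bar> < r" by auto
    then have "t0 * (x / N - y) \<le> \<bar>t0\<bar> * r"
      by (metis abs_ge_self abs_mult less_imp_le mult_left_mono abs_ge_zero order_trans)
    then have "N * (t0 * (x / N - y)) \<le> N * (\<bar>t0\<bar> * r)" using N by (intro mult_left_mono) auto
    then have "t0 * x \<le> N * (t0 * y + \<bar>t0\<bar> * r)" using N by (simp add: algebra_simps)
    then have "exp (t0 * x) \<le> exp (N * (t0 * y + \<bar>t0\<bar> * r))" by simp
    moreover have "(if x / N \<in> {y-r<..<y+r} then 1 else 0) * exp (N * (t0 * y + \<bar>t0\<bar> * r)) = exp (N * (t0 * y + \<bar>t0\<bar> * r))"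
      using 1 by simp
    ultimately show ?thesis using nn2 nn3 by linarith
  next
    case 2
    then have "N * (y + r) \<le> x" using N by (simp add: field_simps)
    then have "0 \<le> s * (x - N * (y + r))" using s by simp
    then have "t0 * x \<le> - s * N * (y + r) + (t0 + s) * x" by (simp add: algebra_simps)
    then have "exp (t0 * x) \<le> exp (- s * N * (y + r)) * exp ((t0 + s) * x)"
      by (simp add: exp_add[symmetric])
    then show ?thesis using nn1 nn3 by linarith
  next
    case 3
    then have "x \<le> N * (y - r)" using N by (simp add: field_simps)
    then have "0 \<le> s * (N * (y - r) - x)" using s by simp
    then have "t0 * x \<le> s * N * (y - r) + (t0 - s) * x" by (simp add: algebra_simps)
    then have "exp (t0 * x) \<le> exp (s * N * (y - r)) * exp ((t0 - s) * x)"
      by (simp add: exp_add[symmetric])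
    then show ?thesis using nn1 nn2 by linarith
  qed
qed

lemma expo_lower:
  assumes d: "(\<eta> has_real_derivative y) (at t0)" and r: "0 < r" and G: "{y-r<..<y+r} \<subseteq> G"
    and Gb: "G \<in> sets borel" and \<epsilon>: "0 < \<epsilon>"
  shows "eventually (\<lambda>N. ereal (\<eta> t0 - t0 * y - \<bar>t0\<bar> * r - \<epsilon>) \<le> Q_fun M S N G) sequentially"
proof -
  note [measurable] = Gb
  have "(\<lambda>h. (\<eta> (t0 + h) - \<eta> t0) / h) \<midarrow>0\<rightarrow> y" using d by (simp add: DERIV_def)
  from LIM_D[OF this, of "r/2"] r obtain d where d: "d > 0"
    and dd: "\<And>h. h \<noteq> 0 \<Longrightarrow> \<bar>h\<bar> < d \<Longrightarrow> \<bar>(\<eta> (t0 + h) - \<eta> t0) / h - y\<bar> < r / 2" by auto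
  define s where "s = d / 2"
  have s: "s > 0" "s < d" using d by (auto simp: s_def)
  have "\<bar>(\<eta> (t0 + s) - \<eta> t0) / s - y\<bar> < r / 2" using dd[of s] s by auto
  then have "(\<eta> (t0 + s) - \<eta> t0) / s < y + r / 2"
    using abs_less_iff[of "(\<eta> (t0 + s) - \<eta> t0) / s - y" "r/2"] by linarith
  then have "\<eta> (t0 + s) - \<eta> t0 < s * (y + r / 2)" using s by (simp add: pos_divide_less_eq mult.commute)
  then have h1: "\<eta> (t0 + s) - s * (y + r) < \<eta> t0 - s * r / 2" by (simp add: algebra_simps)
  have "\<bar>(\<eta> (t0 + - s) - \<eta> t0) / (- s) - y\<bar> < r / 2" using dd[of "-s"] s by auto
  moreover have "(\<eta> (t0 + - s) - \<eta> t0) / (- s) = (\<eta> t0 - \<eta> (t0 - s)) / s"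
    using s by (simp add: divide_simps)
  ultimately have "y - r / 2 < (\<eta> t0 - \<eta> (t0 - s)) / s"
    using abs_less_iff[of "(\<eta> t0 - \<eta> (t0 - s)) / s - y" "r/2"] by linarith
  then have "s * (y - r / 2) < \<eta> t0 - \<eta> (t0 - s)" using s by (simp add: pos_less_divide_eq mult.commute)
  then have h2: "\<eta> (t0 - s) + s * (y - r) < \<eta> t0 - s * r / 2" by (simp add: algebra_simps)
  define cc where "cc = s * r / 2"
  have cc: "cc > 0" using s r by (simp add: cc_def)
  define e where "e = min (cc / 4) (\<epsilon> / 2)"
  have e: "e > 0" "e \<le> cc / 4" "e \<le> \<epsilon> / 2" using cc \<epsilon> by (auto simp: e_def)
  define K1 where "K1 = t0 * y + \<bar>t0\<bar> * r"
  define B where "B N = {\<omega> \<in> space M. S N \<omega> / real N \<in> {y-r<..<y+r}}" for N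
  have B_sets[measurable]: "B N \<in> sets M" for N unfolding B_def by measurable
  have ev0: "eventually (\<lambda>N. \<eta> t0 - e < ln (mg N t0) / real N) sequentially"
    using lim_mg[of t0] e by (intro order_tendstoD) auto
  have ev1: "eventually (\<lambda>N. ln (mg N (t0 + s)) / real N < \<eta> (t0 + s) + e) sequentially"
    using lim_mg[of "t0 + s"] e by (intro order_tendstoD) auto
  have ev2: "eventually (\<lambda>N. ln (mg N (t0 - s)) / real N < \<eta> (t0 - s) + e) sequentially"
    using lim_mg[of "t0 - s"] e by (intro order_tendstoD) auto
  show ?thesis using ev0 ev1 ev2 eventually_gt_at_top[of 0] ev_real_gt[of "2 * ln 4 / cc"]
      ev_real_gt[of "2 * ln 2 / \<epsilon>"]
  proof eventually_elim
    case (elim N)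
    have N: "real N > 0" using elim by simp
    have m0: "exp (real N * (\<eta> t0 - e)) < mg N t0"
    proof -
      have "real N * (\<eta> t0 - e) < ln (mg N t0)" using elim(1) N by (simp add: field_simps)
      then show ?thesis using mg_pos by (metis exp_less_mono exp_ln)
    qed
    have m1: "exp (- s * real N * (y + r)) * mg N (t0 + s) \<le> exp (real N * (\<eta> t0 - cc + e))"
    proof -
      have "ln (mg N (t0 + s)) < real N * (\<eta> (t0 + s) + e)" using elim(2) N by (simp add: field_simps)
      then have "mg N (t0 + s) < exp (real N * (\<eta> (t0 + s) + e))" using mg_pos by (metis exp_less_mono exp_ln)
      then have "exp (- s * real N * (y + r)) * mg N (t0 + s) \<le> exp (- s * real N * (y + r)) * exp (real N * (\<eta> (t0 + s) + e))"
        by simp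
      also have "\<dots> = exp (real N * (\<eta> (t0 + s) - s * (y + r) + e))" by (simp add: exp_add[symmetric] algebra_simps)
      also have "\<dots> \<le> exp (real N * (\<eta> t0 - cc + e))" using h1 N unfolding cc_def
        by (intro exp_mono mult_left_mono) auto
      finally show ?thesis .
    qed
    have m2: "exp (s * real N * (y - r)) * mg N (t0 - s) \<le> exp (real N * (\<eta> t0 - cc + e))"
    proof -
      have "ln (mg N (t0 - s)) < real N * (\<eta> (t0 - s) + e)" using elim(3) N by (simp add: field_simps)
      then have "mg N (t0 - s) < exp (real N * (\<eta> (t0 - s) + e))" using mg_pos by (metis exp_less_mono exp_ln)
      then have "exp (s * real N * (y - r)) * mg N (t0 - s) \<le> exp (s * real N * (y - r)) * exp (real N * (\<eta> (t0 - s) + e))"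
        by simp
      also have "\<dots> = exp (real N * (\<eta> (t0 - s) + s * (y - r) + e))" by (simp add: exp_add[symmetric] algebra_simps)
      also have "\<dots> \<le> exp (real N * (\<eta> t0 - cc + e))" using h2 N unfolding cc_def
        by (intro exp_mono mult_left_mono) auto
      finally show ?thesis .
    qed
    have m3: "2 * exp (real N * (\<eta> t0 - cc + e)) \<le> (1/2) * exp (real N * (\<eta> t0 - e))"
    proof -
      have "ln 4 \<le> real N * (cc / 2)" using elim(5) cc by (simp add: field_simps)
      also have "real N * (cc / 2) \<le> real N * (cc - 2 * e)" using e N by (intro mult_left_mono) auto
      finally have "exp (real N * (2 * e - cc)) \<le> exp (- ln 4)" by (simp add: algebra_simps)
      then have "exp (real N * (2 * e - cc)) \<le> 1 / 4" by (simp add: exp_minus)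
      then have "exp (real N * (\<eta> t0 - e)) * exp (real N * (2 * e - cc)) \<le> exp (real N * (\<eta> t0 - e)) * (1 / 4)"
        by (intro mult_left_mono) auto
      moreover have "exp (real N * (\<eta> t0 - e)) * exp (real N * (2 * e - cc)) = exp (real N * (\<eta> t0 - cc + e))"
        by (simp add: exp_add[symmetric] algebra_simps)
      ultimately show ?thesis by simp
    qed
    have int_bound: "mg N t0 \<le> measure M (B N) * exp (real N * K1)
        + exp (- s * real N * (y + r)) * mg N (t0 + s) + exp (s * real N * (y - r)) * mg N (t0 - s)"
    proof -
      have "mg N t0 \<le> (\<integral>\<omega>. indicator (B N) \<omega> * exp (real N * K1)
        + exp (- s * real N * (y + r)) * exp ((t0 + s) * S N \<omega>) + exp (s * real N * (y - r)) * exp ((t0 - s) * S N \<omega>) \<partial>M)"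
        unfolding mg_def
      proof (rule integral_mono)
        show "integrable M (\<lambda>\<omega>. exp (t0 * S N \<omega>))" by (rule S_int)
        have "integrable M (indicator (B N) :: 'a \<Rightarrow> real)"
          by (intro integrable_real_indicator) (auto simp: less_top[symmetric])
        then show "integrable M (\<lambda>\<omega>. indicator (B N) \<omega> * exp (real N * K1)
        + exp (- s * real N * (y + r)) * exp ((t0 + s) * S N \<omega>) + exp (s * real N * (y - r)) * exp ((t0 - s) * S N \<omega>))"
          using S_int by (intro Bochner_Integration.integrable_add integrable_mult_right integrable_mult_left) auto
        fix \<omega> assume "\<omega> \<in> space M"
        then have ind: "indicator (B N) \<omega> = (if S N \<omega> / real N \<in> {y-r<..<y+r} then 1 else (0::real))"
          by (simp add: B_def indicator_def)
        show "exp (t0 * S N \<omega>) \<le> indicator (B N) \<omega> * exp (real N * K1)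
        + exp (- s * real N * (y + r)) * exp ((t0 + s) * S N \<omega>) + exp (s * real N * (y - r)) * exp ((t0 - s) * S N \<omega>)"
          unfolding ind K1_def by (rule pw_bound[OF N s(1) r])
      qed
      also have "\<dots> = measure M (B N) * exp (real N * K1)
        + exp (- s * real N * (y + r)) * mg N (t0 + s) + exp (s * real N * (y - r)) * mg N (t0 - s)"
      proof -
        have "integrable M (indicator (B N) :: 'a \<Rightarrow> real)"
          by (intro integrable_real_indicator) (auto simp: less_top[symmetric])
        then show ?thesis using S_int unfolding mg_def
          by (simp add: Bochner_Integration.integral_add integral_indicator Int_absorb2 sets.sets_into_space)
      qed
      finally show ?thesis .
    qed
    have pB: "(1/2) * exp (real N * (\<eta> t0 - e)) \<le> measure M (B N) * exp (real N * K1)"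
      using int_bound m0 m1 m2 m3 by linarith
    have pB2: "(1/2) * exp (real N * (\<eta> t0 - e - K1)) \<le> measure M (B N)"
    proof -
      have "(1/2) * exp (real N * (\<eta> t0 - e - K1)) * exp (real N * K1) = (1/2) * exp (real N * (\<eta> t0 - e))"
        by (simp add: exp_add[symmetric] algebra_simps)
      with pB have "(1/2) * exp (real N * (\<eta> t0 - e - K1)) * exp (real N * K1) \<le> measure M (B N) * exp (real N * K1)"
        by simp
      then show ?thesis by simp
    qed
    define p where "p = measure M {\<omega> \<in> space M. S N \<omega> / real N \<in> G}"
    have "B N \<subseteq> {\<omega> \<in> space M. S N \<omega> / real N \<in> G}" using G by (auto simp: B_def)
    then have pBG: "measure M (B N) \<le> p" unfolding p_def using Gb by (intro finite_measure_mono) measurable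
    have "0 < (1/2) * exp (real N * (\<eta> t0 - e - K1))" by simp
    then have ppos: "0 < p" using pB2 pBG by linarith
    have "ln ((1/2) * exp (real N * (\<eta> t0 - e - K1))) \<le> ln p"
      using pB2 pBG by (intro ln_mono) auto
    then have "- ln 2 + real N * (\<eta> t0 - e - K1) \<le> ln p" by (simp add: ln_mult ln_div)
    then have "(- ln 2 + real N * (\<eta> t0 - e - K1)) / real N \<le> ln p / real N" using N by (simp add: divide_right_mono)
    moreover have "(- ln 2 + real N * (\<eta> t0 - e - K1)) / real N = - ln 2 / real N + (\<eta> t0 - e - K1)"
      using N by (simp add: field_simps)
    ultimately have "- ln 2 / real N + (\<eta> t0 - e - K1) \<le> ln p / real N" by simp
    moreover have "ln 2 / real N \<le> \<epsilon> / 2" using elim(6) \<epsilon> N by (simp add: field_simps)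
    ultimately have "\<eta> t0 - t0 * y - \<bar>t0\<bar> * r - \<epsilon> \<le> ln p / real N" using e unfolding K1_def by linarith
    then show ?case using ppos by (simp add: Q_fun_def p_def[symmetric])
  qed
qed

lemma Lambda_ge0: "0 \<le> Lambda_fun \<eta> x"
proof -
  have "ereal (0 * x - \<eta> 0) \<le> Lambda_fun \<eta> x" unfolding Lambda_fun_def by (rule SUP_upper) auto
  then show ?thesis using eta0 by (simp add: zero_ereal_def)
qed

lemma lower_point:
  assumes deriv: "\<And>t. \<eta> differentiable (at t)" and G: "open G" and xG: "x \<in> G"
  shows "- Lambda_fun \<eta> x \<le> liminf (\<lambda>N. Q_fun M S N G)"
proof (cases "Lambda_fun \<eta> x = \<infinity>")
  case True then show ?thesis by simp
next
  case False
  with Lambda_ge0[of x] obtain Lx where Lx: "Lambda_fun \<eta> x = ereal Lx"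
    by (cases "Lambda_fun \<eta> x") auto
  have Lx0: "0 \<le> Lx" using Lambda_ge0[of x] Lx by simp
  have Lup: "t * x - \<eta> t \<le> Lx" for t
  proof -
    have "ereal (t * x - \<eta> t) \<le> Lambda_fun \<eta> x" unfolding Lambda_fun_def by (rule SUP_upper) auto
    then show ?thesis using Lx by simp
  qed
  have Gb: "G \<in> sets borel" using G by simp
  have cont: "continuous_on A \<eta>" for A
    using deriv by (intro continuous_at_imp_continuous_on ballI differentiable_imp_continuous_within) auto
  obtain r where r: "r > 0" "ball x r \<subseteq> G" using G xG open_contains_ball by blast
  have main: "ereal (- Lx - \<epsilon>) \<le> liminf (\<lambda>N. Q_fun M S N G)" if \<epsilon>: "\<epsilon> > 0" for \<epsilon>
  proof -
    define \<delta> where "\<delta> = r^2 / (16 * (Lx + 1))"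
    have \<delta>: "\<delta> > 0" using r Lx0 by (simp add: \<delta>_def)
    define h where "h t = t * x - \<eta> t - \<delta> * t^2" for t
    define R where "R = sqrt ((Lx + 1) / \<delta>) + 1"
    have R: "R > 0" using \<delta> Lx0 by (simp add: R_def add_pos_nonneg)
    have R2: "(Lx + 1) / \<delta> < R^2"
    proof -
      have "sqrt ((Lx + 1) / \<delta>) < R" by (simp add: R_def)
      then have "(sqrt ((Lx + 1) / \<delta>))^2 < R^2"
        using \<delta> Lx0 by (intro power_strict_mono) auto
      moreover have "0 \<le> (Lx + 1) / \<delta>" using \<delta> Lx0 by simp
      ultimately show ?thesis by simp
    qed
    have hcont: "continuous_on {-R..R} h" unfolding h_def
      by (intro continuous_intros cont)
    obtain t0 where t0: "t0 \<in> {-R..R}" and t0max: "\<And>t. t \<in> {-R..R} \<Longrightarrow> h t \<le> h t0"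
      using continuous_attains_sup[OF compact_Icc _ hcont] R by fastforce
    have h0: "h 0 = 0" by (simp add: h_def eta0)
    have ht0: "0 \<le> h t0" using t0max[of 0] R h0 by simp
    have dt0: "\<delta> * t0^2 \<le> Lx" using ht0 Lup[of t0] by (simp add: h_def)
    have t0R: "\<bar>t0\<bar> < R"
    proof (rule ccontr)
      assume "\<not> \<bar>t0\<bar> < R"
      then have "R \<le> \<bar>t0\<bar>" by simp
      then have "R^2 \<le> \<bar>t0\<bar>^2" using R by (intro power_mono) auto
      then have "R^2 \<le> t0^2" by simp
      then have "\<delta> * R^2 \<le> \<delta> * t0^2" using \<delta> by simp
      moreover have "Lx + 1 < \<delta> * R^2" using R2 \<delta> by (simp add: field_simps)
      ultimately show False using dt0 by linarith
    qed
    obtain D where D: "(\<eta> has_real_derivative D) (at t0)" using deriv[of t0] by (auto simp: real_differentiable_def)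
    have hD: "(h has_real_derivative (x - D - \<delta> * (2 * t0))) (at t0)" unfolding h_def
      by (auto intro!: derivative_eq_intros D)
    have "x - D - \<delta> * (2 * t0) = 0"
    proof (rule DERIV_local_max[OF hD])
      show "0 < R - \<bar>t0\<bar>" using t0R by simp
      show "\<forall>y. \<bar>t0 - y\<bar> < R - \<bar>t0\<bar> \<longrightarrow> h y \<le> h t0"
        by (intro allI impI t0max) auto
    qed
    then have Dx: "D = x - 2 * \<delta> * t0" by simp
    have closeD: "\<bar>D - x\<bar> < r / 2"
    proof -
      have a1: "(2 * \<delta> * \<bar>t0\<bar>)^2 = 4 * \<delta> * (\<delta> * t0^2)"
        by (simp add: power_mult_distrib power2_eq_square)
      have a2: "4 * \<delta> * (\<delta> * t0^2) \<le> 4 * \<delta> * Lx"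
        using \<delta> dt0 by (intro mult_left_mono) auto
      have "Lx + 1 \<noteq> 0" using Lx0 by simp
      then have a00: "\<delta> * (Lx + 1) = r^2 / 16" unfolding \<delta>_def
        by (simp only: times_divide_eq_left) (rule mult_divide_mult_cancel_right)
      have a0: "(r/2)^2 = 4 * \<delta> * (Lx + 1)"
        using a00 by (simp add: power_divide)
      have a3: "4 * \<delta> * Lx < 4 * \<delta> * (Lx + 1)"
        using \<delta> by (intro mult_strict_left_mono) auto
      have a4: "(2 * \<delta> * \<bar>t0\<bar>)^2 < (r/2)^2" using a1 a2 a3 a0 by linarith
      have a5: "2 * \<delta> * \<bar>t0\<bar> < r / 2"
        by (rule power_less_imp_less_base[OF a4]) (use r in simp)
      have a6: "\<bar>D - x\<bar> = 2 * \<delta> * \<bar>t0\<bar>"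
        unfolding Dx using \<delta> by (simp add: abs_mult)
      show ?thesis using a5 a6 by simp
    qed
    define r' where "r' = min (r / 2) (\<epsilon> / (2 * (\<bar>t0\<bar> + 1)))"
    have r': "r' > 0" "r' \<le> r / 2" using r \<epsilon> unfolding r'_def by (simp_all add: min_def)
    have r't: "\<bar>t0\<bar> * r' \<le> \<epsilon> / 2"
    proof -
      have "\<bar>t0\<bar> * r' \<le> \<bar>t0\<bar> * (\<epsilon> / (2 * (\<bar>t0\<bar> + 1)))" by (intro mult_left_mono) (auto simp: r'_def)
      also have "\<dots> \<le> (\<bar>t0\<bar> + 1) * (\<epsilon> / (2 * (\<bar>t0\<bar> + 1)))" using \<epsilon> by (intro mult_right_mono) auto
      also have "\<dots> = \<epsilon> / 2"
      proof -
        have gen: "\<And>a::real. a > 0 \<Longrightarrow> a * (\<epsilon> / (2 * a)) = \<epsilon> / 2" by (simp add: field_simps)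
        show ?thesis by (rule gen) simp
      qed
      finally show ?thesis .
    qed
    have sub: "{D - r'<..<D + r'} \<subseteq> G"
    proof
      fix z assume "z \<in> {D - r'<..<D + r'}"
      then have "\<bar>z - x\<bar> < r" using closeD r' abs_less_iff[of "D - x" "r/2"] abs_less_iff[of "z - x" r] by auto
      then show "z \<in> G" using r(2) by (auto simp: dist_real_def abs_minus_commute)
    qed
    have ev: "eventually (\<lambda>N. ereal (\<eta> t0 - t0 * D - \<bar>t0\<bar> * r' - \<epsilon> / 2) \<le> Q_fun M S N G) sequentially"
      using \<epsilon> by (intro expo_lower[OF D r'(1) sub Gb]) auto
    have "- Lx - \<epsilon> \<le> \<eta> t0 - t0 * D - \<bar>t0\<bar> * r' - \<epsilon> / 2"
    proof -
      have "\<eta> t0 - t0 * D = - (t0 * x - \<eta> t0) + 2 * (\<delta> * t0^2)" by (simp add: Dx power2_eq_square algebra_simps)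
      moreover have "0 \<le> \<delta> * t0^2" using \<delta> by simp
      ultimately show ?thesis using Lup[of t0] r't by linarith
    qed
    then have lb: "ereal (- Lx - \<epsilon>) \<le> ereal (\<eta> t0 - t0 * D - \<bar>t0\<bar> * r' - \<epsilon> / 2)" by simp
    have "eventually (\<lambda>N. ereal (- Lx - \<epsilon>) \<le> Q_fun M S N G) sequentially"
      using ev
    proof eventually_elim
      case (elim N)
      show ?case by (rule order_trans[OF lb elim])
    qed
    then show ?thesis by (rule Liminf_bounded)
  qed
  show ?thesis unfolding Lx
  proof (rule ccontr)
    assume "\<not> - ereal Lx \<le> liminf (\<lambda>N. Q_fun M S N G)"
    then have "liminf (\<lambda>N. Q_fun M S N G) < ereal (- Lx)" by simp
    then obtain z where z: "liminf (\<lambda>N. Q_fun M S N G) < ereal z" "z < - Lx"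
      using ereal_dense2 by fastforce
    have "ereal (- Lx - (- Lx - z)) \<le> liminf (\<lambda>N. Q_fun M S N G)" using z by (intro main) auto
    then show False using z by simp
  qed
qed

theorem lower_bound:
  assumes deriv: "\<And>t. \<eta> differentiable (at t)" and G: "open G"
  shows "- (INF x\<in>G. Lambda_fun \<eta> x) \<le> liminf (\<lambda>N. Q_fun M S N G)"
proof -
  have "- liminf (\<lambda>N. Q_fun M S N G) \<le> (INF x\<in>G. Lambda_fun \<eta> x)"
  proof (rule INF_greatest)
    fix x assume "x \<in> G"
    from lower_point[OF deriv G this] show "- liminf (\<lambda>N. Q_fun M S N G) \<le> Lambda_fun \<eta> x"
      by (simp add: ereal_uminus_le_reorder)
  qed
  then show ?thesis by (simp add: ereal_uminus_le_reorder)
qed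

end



locale nc_setting = prob_space M for M :: "'a measure" +
  fixes X :: "nat \<Rightarrow> 'a \<Rightarrow> real" and D :: real
  assumes rv[measurable]: "\<And>n. X n \<in> borel_measurable M"
    and indep: "indep_vars (\<lambda>_. borel) X UNIV"
    and ident: "\<And>n. distr M borel (X n) = distr M borel (X 0)"
    and bdd: "AE \<omega> in M. \<bar>X 0 \<omega>\<bar> \<le> D"
begin

definition mom :: "nat \<Rightarrow> real" where "mom k = (\<integral>\<omega>. X 0 \<omega> ^ k \<partial>M)"

lemma bddn: "AE \<omega> in M. \<bar>X n \<omega>\<bar> \<le> D"
proof -
  have "AE z in distr M borel (X 0). \<bar>z\<bar> \<le> D"
    using bdd by (subst AE_distr_iff) auto
  then have "AE z in distr M borel (X n). \<bar>z\<bar> \<le> D" by (simp only: ident[of n])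
  then show ?thesis by (subst (asm) AE_distr_iff) auto
qed

lemma bdd_all: "AE \<omega> in M. \<forall>n. \<bar>X n \<omega>\<bar> \<le> D"
  using bddn by (simp add: AE_all_countable)

lemma D0: "0 \<le> D"
proof (rule ccontr)
  assume "\<not> 0 \<le> D"
  then have "AE \<omega> in M. False" using bdd by (intro eventually_mono[OF bdd]) auto
  then show False by simp
qed

lemma ident_int:
  fixes g :: "real \<Rightarrow> real"
  assumes g[measurable]: "g \<in> borel_measurable borel"
  shows "(\<integral>\<omega>. g (X n \<omega>) \<partial>M) = (\<integral>\<omega>. g (X 0 \<omega>) \<partial>M)"
proof -
  have "(\<integral>\<omega>. g (X n \<omega>) \<partial>M) = (\<integral>z. g z \<partial>distr M borel (X n))"
    by (subst Bochner_Integration.integral_distr) auto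
  also have "\<dots> = (\<integral>z. g z \<partial>distr M borel (X 0))" by (simp only: ident[of n])
  also have "\<dots> = (\<integral>\<omega>. g (X 0 \<omega>) \<partial>M)" by (subst Bochner_Integration.integral_distr) auto
  finally show ?thesis .
qed

lemma prod_indep:
  fixes g :: "nat \<Rightarrow> real \<Rightarrow> real"
  assumes J: "finite J" and g: "\<And>i. i \<in> J \<Longrightarrow> g i \<in> borel_measurable borel"
    and gi: "\<And>i. i \<in> J \<Longrightarrow> integrable M (\<lambda>\<omega>. g i (X i \<omega>))"
  shows "(\<integral>\<omega>. (\<Prod>i\<in>J. g i (X i \<omega>)) \<partial>M) = (\<Prod>i\<in>J. \<integral>\<omega>. g i (X i \<omega>) \<partial>M)"
proof -
  have "indep_vars (\<lambda>_. borel) X J" using indep_vars_subset[OF indep] by auto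
  then have "indep_vars (\<lambda>_. borel) (\<lambda>i \<omega>. g i (X i \<omega>)) J"
    using g by (rule indep_vars_compose2) auto
  then show ?thesis using J gi by (intro indep_vars_lebesgue_integral) auto
qed

lemma pow_abs_le: "\<bar>x\<bar> \<le> D \<Longrightarrow> \<bar>(x::real) ^ k\<bar> \<le> D ^ k"
  by (simp add: power_abs power_mono)

lemma pow_AE: "AE \<omega> in M. \<bar>X n \<omega> ^ k\<bar> \<le> D ^ k"
  using bddn[of n] by (rule eventually_mono) (rule pow_abs_le)

lemma pow_int: "integrable M (\<lambda>\<omega>. X n \<omega> ^ k)"
  using pow_AE[of n k] by (intro integrable_const_bound[where B="D^k"]) auto

lemma mom_bound: "\<bar>mom k\<bar> \<le> D ^ k"
proof -
  have "\<bar>mom k\<bar> \<le> (\<integral>\<omega>. \<bar>X 0 \<omega> ^ k\<bar> \<partial>M)" unfolding mom_def by (rule integral_abs_bound)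
  also have "\<dots> \<le> (\<integral>\<omega>. D ^ k \<partial>M)"
  proof (rule integral_mono_AE)
    show "integrable M (\<lambda>\<omega>. \<bar>X 0 \<omega> ^ k\<bar>)"
      using pow_int[of 0 k] by simp
    show "AE \<omega> in M. \<bar>X 0 \<omega> ^ k\<bar> \<le> D ^ k" by (rule pow_AE)
  qed simp
  also have "\<dots> = D ^ k" by (simp add: prob_space)
  finally show ?thesis .
qed

definition fser :: "nat \<Rightarrow> real \<Rightarrow> real" where
  "fser l t = (\<Sum>k. t ^ k / fact k * mom k ^ l)"

lemma prod_bound:
  assumes "finite J" "\<forall>n. \<bar>X n \<omega>\<bar> \<le> D"
  shows "\<bar>\<Prod>i\<in>J. X i \<omega>\<bar> \<le> D ^ card J"
proof -
  have "\<bar>\<Prod>i\<in>J. X i \<omega>\<bar> = (\<Prod>i\<in>J. \<bar>X i \<omega>\<bar>)" by (simp add: abs_prod)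
  also have "\<dots> \<le> (\<Prod>i\<in>J. D)" using assms by (intro prod_mono) auto
  also have "\<dots> = D ^ card J" by simp
  finally show ?thesis .
qed

lemma series_lemma:
  assumes J: "finite J"
  shows "(\<integral>\<omega>. exp (t * (\<Prod>i\<in>J. X i \<omega>)) \<partial>M) = fser (card J) t"
proof -
  define Y where "Y \<omega> = (\<Prod>i\<in>J. X i \<omega>)" for \<omega>
  define K where "K = D ^ card J"
  have Ym[measurable]: "Y \<in> borel_measurable M" unfolding Y_def by measurable
  have Yb: "AE \<omega> in M. \<bar>Y \<omega>\<bar> \<le> K"
    using bdd_all by eventually_elim (simp add: Y_def K_def prod_bound[OF J])
  define f where "f k \<omega> = (t * Y \<omega>) ^ k / fact k" for k \<omega>
  have fm[measurable]: "f k \<in> borel_measurable M" for k unfolding f_def by measurable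
  have fb: "AE \<omega> in M. \<bar>f k \<omega>\<bar> \<le> (\<bar>t\<bar> * K) ^ k / fact k" for k
    using Yb
  proof eventually_elim
    case (elim \<omega>)
    have "\<bar>t * Y \<omega>\<bar> \<le> \<bar>t\<bar> * K" using elim by (simp add: abs_mult mult_left_mono)
    then have "\<bar>t * Y \<omega>\<bar> ^ k \<le> (\<bar>t\<bar> * K) ^ k" by (intro power_mono) auto
    then show ?case by (simp add: f_def power_abs divide_right_mono)
  qed
  have fi: "integrable M (f k)" for k
    using fb[of k] fm[of k] by (intro integrable_const_bound[where B="(\<bar>t\<bar> * K) ^ k / fact k"]) auto
  have sum_exp: "(\<lambda>k. f k \<omega>) sums exp (t * Y \<omega>)" for \<omega>
    using exp_converges[of "t * Y \<omega>"] by (simp add: f_def divide_inverse_commute scaleR_conv_of_real)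
  have "(\<integral>\<omega>. exp (t * Y \<omega>) \<partial>M) = (\<integral>\<omega>. (\<Sum>k. f k \<omega>) \<partial>M)"
    by (intro Bochner_Integration.integral_cong refl) (metis sums_unique sum_exp)
  also have "\<dots> = (\<Sum>k. integral\<^sup>L M (f k))"
  proof (rule integral_suminf)
    show "integrable M (f k)" for k by (rule fi)
    show "AE \<omega> in M. summable (\<lambda>k. norm (f k \<omega>))"
    proof (rule AE_I2)
      fix \<omega>
      have "summable (\<lambda>k. inverse (fact k) * \<bar>t * Y \<omega>\<bar> ^ k)" by (rule summable_exp)
      then show "summable (\<lambda>k. norm (f k \<omega>))"
        by (simp add: f_def power_abs divide_inverse_commute abs_mult)
    qed
    show "summable (\<lambda>k. \<integral>\<omega>. norm (f k \<omega>) \<partial>M)"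
    proof (rule summable_comparison_test'[where g="\<lambda>k. inverse (fact k) * (\<bar>t\<bar> * K) ^ k"])
      show "summable (\<lambda>k. inverse (fact k) * (\<bar>t\<bar> * K) ^ k)" by (rule summable_exp)
      fix k :: nat
      have "(\<integral>\<omega>. norm (f k \<omega>) \<partial>M) \<le> (\<integral>\<omega>. (\<bar>t\<bar> * K) ^ k / fact k \<partial>M)"
        using fi[of k] fb[of k] by (intro integral_mono_AE) auto
      also have "\<dots> = inverse (fact k) * (\<bar>t\<bar> * K) ^ k" by (simp add: prob_space divide_inverse_commute)
      finally show "norm (\<integral>\<omega>. norm (f k \<omega>) \<partial>M) \<le> inverse (fact k) * (\<bar>t\<bar> * K) ^ k"
        by simp
    qed
  qed
  also have "\<dots> = (\<Sum>k. t ^ k / fact k * mom k ^ card J)"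
  proof (rule suminf_cong)
    fix k
    have "integral\<^sup>L M (f k) = t ^ k / fact k * (\<integral>\<omega>. Y \<omega> ^ k \<partial>M)"
      unfolding f_def power_mult_distrib by (simp add: integral_divide_zero)
    also have "(\<integral>\<omega>. Y \<omega> ^ k \<partial>M) = (\<integral>\<omega>. (\<Prod>i\<in>J. X i \<omega> ^ k) \<partial>M)"
      by (simp add: Y_def prod_power_distrib)
    also have "\<dots> = (\<Prod>i\<in>J. \<integral>\<omega>. X i \<omega> ^ k \<partial>M)"
    proof (rule prod_indep[OF J, where g="\<lambda>i x. x ^ k"])
      fix i
      show "integrable M (\<lambda>\<omega>. X i \<omega> ^ k)"
        by (rule pow_int)
    qed auto
    also have "\<dots> = (\<Prod>i\<in>J. mom k)"
      unfolding mom_def by (intro prod.cong refl ident_int) auto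
    also have "\<dots> = mom k ^ card J" by simp
    finally show "integral\<^sup>L M (f k) = t ^ k / fact k * mom k ^ card J" .
  qed
  finally show ?thesis by (simp add: Y_def fser_def)
qed

lemma exp_prod_int:
  assumes J: "finite J"
  shows "integrable M (\<lambda>\<omega>. exp (t * (\<Prod>i\<in>J. X i \<omega>)))"
proof -
  have "AE \<omega> in M. norm (exp (t * (\<Prod>i\<in>J. X i \<omega>))) \<le> exp (\<bar>t\<bar> * D ^ card J)"
    using bdd_all
  proof eventually_elim
    case (elim \<omega>)
    have "\<bar>\<Prod>i\<in>J. X i \<omega>\<bar> \<le> D ^ card J" by (rule prod_bound[OF J elim])
    then have "t * (\<Prod>i\<in>J. X i \<omega>) \<le> \<bar>t\<bar> * D ^ card J"
      by (metis abs_ge_self abs_ge_zero abs_mult mult_left_mono order_trans)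
    then show ?case by simp
  qed
  then show ?thesis by (intro integrable_const_bound) auto
qed

lemma fser_pos: "fser l t > 0"
proof -
  have eq: "fser l t = (\<integral>\<omega>. exp (t * (\<Prod>i\<in>{1..l}. X i \<omega>)) \<partial>M)"
    using series_lemma[of "{1..l}" t] by simp
  have ge: "0 \<le> (\<integral>\<omega>. exp (t * (\<Prod>i\<in>{1..l}. X i \<omega>)) \<partial>M)" by (intro integral_nonneg_AE) auto
  have "(\<integral>\<omega>. exp (t * (\<Prod>i\<in>{1..l}. X i \<omega>)) \<partial>M) \<noteq> 0"
  proof
    assume "(\<integral>\<omega>. exp (t * (\<Prod>i\<in>{1..l}. X i \<omega>)) \<partial>M) = 0"
    then have "AE \<omega> in M. exp (t * (\<Prod>i\<in>{1..l}. X i \<omega>)) = 0"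
      using integral_nonneg_eq_0_iff_AE[OF exp_prod_int[of "{1..l}" t]] by auto
    then have "AE \<omega> in M. False" by simp
    then show False by simp
  qed
  with ge eq show ?thesis by linarith
qed

lemma fser_jensen: "exp (t * mom 1 ^ l) \<le> fser l t"
proof -
  define m where "m = mom 1 ^ l"
  define Y where "Y \<omega> = (\<Prod>i\<in>{1..l}. X i \<omega>)" for \<omega>
  have Ym[measurable]: "Y \<in> borel_measurable M" unfolding Y_def by measurable
  have Yint: "integrable M Y"
  proof -
    have "AE \<omega> in M. norm (Y \<omega>) \<le> D ^ card {1..l}"
      using bdd_all by eventually_elim (simp add: Y_def prod_bound[of "{1..l}", simplified])
    then show ?thesis by (intro integrable_const_bound) auto
  qed
  have EY: "(\<integral>\<omega>. Y \<omega> \<partial>M) = m"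
  proof -
    have "(\<integral>\<omega>. Y \<omega> \<partial>M) = (\<Prod>i\<in>{1..l}. \<integral>\<omega>. X i \<omega> \<partial>M)"
      unfolding Y_def using prod_indep[of "{1..l}" "\<lambda>i x. x"] pow_int[where k=1] by simp
    also have "\<dots> = (\<Prod>i\<in>{1..l}. mom 1)"
    proof (intro prod.cong refl)
      fix i show "(\<integral>\<omega>. X i \<omega> \<partial>M) = mom 1" unfolding mom_def using ident_int[where g="\<lambda>x. x" and n=i] by simp
    qed
    finally show ?thesis by (simp add: m_def)
  qed
  have "exp (t * m) = (\<integral>\<omega>. exp (t * m) * (1 + t * (Y \<omega> - m)) \<partial>M)"
    using Yint EY prob_space by (simp add: algebra_simps Bochner_Integration.integral_add Bochner_Integration.integral_diff)
  also have "\<dots> \<le> (\<integral>\<omega>. exp (t * Y \<omega>) \<partial>M)"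
  proof (rule integral_mono)
    show "integrable M (\<lambda>\<omega>. exp (t * m) * (1 + t * (Y \<omega> - m)))" using Yint by auto
    show "integrable M (\<lambda>\<omega>. exp (t * Y \<omega>))" using exp_prod_int[of "{1..l}" t] by (simp add: Y_def)
    fix \<omega>
    have "1 + t * (Y \<omega> - m) \<le> exp (t * (Y \<omega> - m))" by (rule exp_ge_add_one_self)
    then have "exp (t * m) * (1 + t * (Y \<omega> - m)) \<le> exp (t * m) * exp (t * (Y \<omega> - m))" by simp
    also have "\<dots> = exp (t * Y \<omega>)" by (simp add: exp_add[symmetric] algebra_simps)
    finally show "exp (t * m) * (1 + t * (Y \<omega> - m)) \<le> exp (t * Y \<omega>)" .
  qed
  also have "\<dots> = fser l t" using series_lemma[of "{1..l}" t] by (simp add: Y_def)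
  finally show ?thesis by (simp add: m_def)
qed

lemma fser_deriv: "\<exists>D'. (fser l has_real_derivative D') (at t)"
proof -
  define c where "c k = mom k ^ l / fact k" for k
  have eqf: "fser l = (\<lambda>x. \<Sum>n. c n * x ^ n)"
    unfolding fser_def c_def fun_eq_iff by (intro allI suminf_cong) simp
  have sm: "summable (\<lambda>n. c n * y ^ n)" for y :: real
  proof (rule summable_comparison_test'[where g="\<lambda>n. inverse (fact n) * (D ^ l * \<bar>y\<bar>) ^ n" and N=0])
    show "summable (\<lambda>n. inverse (fact n) * (D ^ l * \<bar>y\<bar>) ^ n)" by (rule summable_exp)
    fix n :: nat
    have "\<bar>mom n ^ l\<bar> \<le> (D ^ n) ^ l"
      unfolding power_abs by (intro power_mono mom_bound) simp
    also have "\<dots> = (D ^ l) ^ n" by (simp add: power_mult[symmetric] mult.commute)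
    finally have "\<bar>mom n ^ l\<bar> * \<bar>y\<bar> ^ n \<le> (D ^ l) ^ n * \<bar>y\<bar> ^ n" by (intro mult_right_mono) auto
    then show "norm (c n * y ^ n) \<le> inverse (fact n) * (D ^ l * \<bar>y\<bar>) ^ n"
      by (simp add: c_def abs_mult power_abs power_mult_distrib divide_inverse_commute divide_right_mono)
  qed
  show ?thesis unfolding eqf using termdiffs_strong_converges_everywhere[of c t] sm by blast
qed

lemma eta_eq: "eta_fun M X l = (\<lambda>t. ln (fser l t))"
  by (simp add: eta_fun_def fser_def mom_def fun_eq_iff)

lemma eta_diff: "eta_fun M X l differentiable (at t)"
proof -
  obtain D' where d: "(fser l has_real_derivative D') (at t)" using fser_deriv by blast
  have "((\<lambda>t. ln (fser l t)) has_real_derivative (1 / fser l t * D')) (at t)"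
    using fser_pos by (intro DERIV_chain2[OF DERIV_ln_divide d]) auto
  then show ?thesis unfolding eta_eq real_differentiable_def by blast
qed

end



locale nc_q = nc_setting M X D for M :: "'a measure" and X D +
  fixes q :: "nat \<Rightarrow> nat \<Rightarrow> nat" and l :: nat and \<gamma> :: real and n0 :: int
  assumes q_mono: "\<And>j. j \<in> {1..l} \<Longrightarrow> strict_mono (q j)"
    and gamma: "0 < \<gamma>" "\<gamma> < 1"
    and q_sep: "\<And>n j. int n \<ge> n0 \<Longrightarrow> j \<in> {1..<l} \<Longrightarrow>
                   q (Suc j) (nat \<lfloor>real n powr \<gamma>\<rfloor>) > q j n"
begin

definition idx :: "nat \<Rightarrow> nat set" where "idx n = (\<lambda>j. q j n) ` {1..l}"
definition good :: "nat \<Rightarrow> nat set" where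
  "good N = {n \<in> {0..N}. inj_on (\<lambda>j. q j n) {1..l} \<and> (\<forall>m\<in>{0..N}. m \<noteq> n \<longrightarrow> idx m \<inter> idx n = {})}"
definition bad :: "nat \<Rightarrow> nat set" where "bad N = {0..N} - good N"
definition KK :: "nat \<Rightarrow> nat" where "KK N = nat \<lceil>real N powr \<gamma>\<rceil> + nat n0 + 1"

lemma floor_le: "nat \<lfloor>real n powr \<gamma>\<rfloor> \<le> n"
proof (cases "n = 0")
  case True then show ?thesis by simp
next
  case False
  then have "real n powr \<gamma> \<le> real n powr 1" using gamma by (intro powr_mono) auto
  then have "real n powr \<gamma> \<le> real n" using False by simp
  then show ?thesis by linarith
qed

lemma floor_le_K:
  assumes "a \<le> N" "KK N \<le> b"
  shows "nat \<lfloor>real a powr \<gamma>\<rfloor> \<le> b"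
proof -
  have "real a powr \<gamma> \<le> real N powr \<gamma>" using assms gamma by (intro powr_mono2) auto
  also have "\<dots> \<le> real (nat \<lceil>real N powr \<gamma>\<rceil>)" by linarith
  finally have "nat \<lfloor>real a powr \<gamma>\<rfloor> \<le> nat \<lceil>real N powr \<gamma>\<rceil>" by linarith
  then show ?thesis using assms unfolding KK_def by linarith
qed

lemma q_inj: "j \<in> {1..l} \<Longrightarrow> inj (q j)"
  using q_mono strict_mono_imp_inj_on by blast

lemma q_monoD: "j \<in> {1..l} \<Longrightarrow> a \<le> b \<Longrightarrow> q j a \<le> q j b"
  using q_mono strict_mono_mono monoD by blast

lemma q_step: "i \<in> {1..<l} \<Longrightarrow> int m \<ge> n0 \<Longrightarrow> q i m < q (Suc i) m"
proof -
  assume i: "i \<in> {1..<l}" and m: "int m \<ge> n0"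
  have "q i m < q (Suc i) (nat \<lfloor>real m powr \<gamma>\<rfloor>)" by (rule q_sep[OF m i])
  also have "\<dots> \<le> q (Suc i) m" using i by (intro q_monoD floor_le) auto
  finally show ?thesis .
qed

lemma q_higher_aux:
  assumes j: "1 \<le> j" and n: "int n \<ge> n0" and m: "int m \<ge> n0" and nm: "nat \<lfloor>real n powr \<gamma>\<rfloor> \<le> m"
  shows "Suc j + d \<le> l \<Longrightarrow> q j n < q (Suc j + d) m"
proof (induction d)
  case 0
  then have jl: "j \<in> {1..<l}" using j by auto
  have "q j n < q (Suc j) (nat \<lfloor>real n powr \<gamma>\<rfloor>)" by (rule q_sep[OF n jl])
  also have "\<dots> \<le> q (Suc j) m" using 0 j by (intro q_monoD nm) auto
  finally show ?case by simp
next
  case (Suc d)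
  then have "q j n < q (Suc j + d) m" by simp
  also have "\<dots> < q (Suc (Suc j + d)) m" using Suc.prems j by (intro q_step m) auto
  finally show ?case by simp
qed

lemma q_higher:
  assumes "j \<in> {1..l}" "j' \<in> {1..l}" "j < j'" "int n \<ge> n0" "int m \<ge> n0" "nat \<lfloor>real n powr \<gamma>\<rfloor> \<le> m"
  shows "q j n < q j' m"
proof -
  obtain d where d: "j' = Suc j + d" using assms(3) by (metis less_iff_Suc_add add_Suc)
  show ?thesis using q_higher_aux[of j n m d] assms d by auto
qed

lemma bad_sub:
  "bad N \<subseteq> {..<KK N} \<union> (\<Union>j\<in>{1..l}. \<Union>j'\<in>{1..l}. \<Union>m\<in>{..<KK N}. {0..N} \<inter> {n. q j n = q j' m})"
proof
  fix n assume nb: "n \<in> bad N"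
  show "n \<in> {..<KK N} \<union> (\<Union>j\<in>{1..l}. \<Union>j'\<in>{1..l}. \<Union>m\<in>{..<KK N}. {0..N} \<inter> {n. q j n = q j' m})"
  proof (cases "n < KK N")
    case True then show ?thesis by simp
  next
    case False
    then have nK: "KK N \<le> n" by simp
    have nN: "n \<le> N" using nb by (simp add: bad_def)
    have n0n: "int n \<ge> n0" using nK unfolding KK_def by linarith
    have ng: "n \<notin> good N" using nb by (simp add: bad_def)
    then have "\<not> inj_on (\<lambda>j. q j n) {1..l} \<or> (\<exists>m\<in>{0..N}. m \<noteq> n \<and> idx m \<inter> idx n \<noteq> {})"
      using nN by (auto simp: good_def)
    then show ?thesis
    proof
      assume "\<not> inj_on (\<lambda>j. q j n) {1..l}"
      then obtain j j' where jj: "j \<in> {1..l}" "j' \<in> {1..l}" "j \<noteq> j'" "q j n = q j' n"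
        unfolding inj_on_def by blast
      have fl: "nat \<lfloor>real n powr \<gamma>\<rfloor> \<le> n" by (rule floor_le)
      show ?thesis
      proof (cases "j < j'")
        case True
        then have "q j n < q j' n" using q_higher[OF jj(1,2) True n0n n0n fl] by simp
        then show ?thesis using jj by simp
      next
        case False
        then have "j' < j" using jj by simp
        then have "q j' n < q j n" using q_higher[OF jj(2,1) _ n0n n0n fl] by simp
        then show ?thesis using jj by simp
      qed
    next
      assume "\<exists>m\<in>{0..N}. m \<noteq> n \<and> idx m \<inter> idx n \<noteq> {}"
      then obtain m where m: "m \<le> N" "m \<noteq> n" and mi: "idx m \<inter> idx n \<noteq> {}" by force
      then obtain z where z: "z \<in> idx m" "z \<in> idx n" by blast
      obtain j' where j': "j' \<in> {1..l}" "z = q j' m" using z(1) unfolding idx_def by blast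
      obtain j where j: "j \<in> {1..l}" "z = q j n" using z(2) unfolding idx_def by blast
      have jj: "j \<in> {1..l}" "j' \<in> {1..l}" "q j n = q j' m" using j j' by auto
      show ?thesis
      proof (cases "m < KK N")
        case True
        have "n \<in> {0..N} \<inter> {n. q j n = q j' m}" using jj nN by simp
        then have "n \<in> (\<Union>j\<in>{1..l}. \<Union>j'\<in>{1..l}. \<Union>m\<in>{..<KK N}. {0..N} \<inter> {n. q j n = q j' m})"
          using jj True by (intro UN_I[of j] UN_I[of j'] UN_I[of m]) auto
        then show ?thesis by (rule UnI2)
      next
        case False
        then have mK: "KK N \<le> m" by simp
        have n0m: "int m \<ge> n0" using mK unfolding KK_def by linarith
        have f1: "nat \<lfloor>real n powr \<gamma>\<rfloor> \<le> m" by (rule floor_le_K[OF nN mK])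
        have f2: "nat \<lfloor>real m powr \<gamma>\<rfloor> \<le> n" by (rule floor_le_K[OF m(1) nK])
        consider "j = j'" | "j < j'" | "j' < j" by linarith
        then show ?thesis
        proof cases
          case 1
          then have "n = m" using jj q_inj[OF jj(1)] by (auto dest: injD)
          then show ?thesis using m by simp
        next
          case 2
          then show ?thesis using q_higher[OF jj(1,2) 2 n0n n0m f1] jj by simp
        next
          case 3
          then show ?thesis using q_higher[OF jj(2,1) 3 n0m n0n f2] jj by simp
        qed
      qed
    qed
  qed
qed

lemma card_bad: "card (bad N) \<le> KK N + l * l * KK N"
proof -
  define U where "U = (\<Union>j\<in>{1..l}. \<Union>j'\<in>{1..l}. \<Union>m\<in>{..<KK N}. {0..N} \<inter> {n. q j n = q j' m})"
  have cU: "card U \<le> l * l * KK N"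
  proof -
    have c1: "card ({0..N} \<inter> {n. q j n = q j' m}) \<le> 1" if "j \<in> {1..l}" for j j' m
    proof -
      have "card ({0..N} \<inter> {n. q j n = q j' m}) \<le> Suc 0"
        using q_inj[OF that] by (subst card_le_Suc0_iff_eq) (auto, metis injD)
      then show ?thesis by simp
    qed
    have "card U \<le> (\<Sum>j\<in>{1..l}. card (\<Union>j'\<in>{1..l}. \<Union>m\<in>{..<KK N}. {0..N} \<inter> {n. q j n = q j' m}))"
      unfolding U_def by (rule card_UN_le) simp
    also have "\<dots> \<le> (\<Sum>j\<in>{1..l}. l * KK N)"
    proof (rule sum_mono)
      fix j assume j: "j \<in> {1..l}"
      have "card (\<Union>j'\<in>{1..l}. \<Union>m\<in>{..<KK N}. {0..N} \<inter> {n. q j n = q j' m})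
          \<le> (\<Sum>j'\<in>{1..l}. card (\<Union>m\<in>{..<KK N}. {0..N} \<inter> {n. q j n = q j' m}))"
        by (rule card_UN_le) simp
      also have "\<dots> \<le> (\<Sum>j'\<in>{1..l}. KK N)"
      proof (rule sum_mono)
        fix j' assume "j' \<in> {1..l}"
        have "card (\<Union>m\<in>{..<KK N}. {0..N} \<inter> {n. q j n = q j' m}) \<le> (\<Sum>m\<in>{..<KK N}. card ({0..N} \<inter> {n. q j n = q j' m}))"
          by (rule card_UN_le) simp
        also have "\<dots> \<le> (\<Sum>m\<in>{..<KK N}. 1)" by (intro sum_mono c1 j)
        finally show "card (\<Union>m\<in>{..<KK N}. {0..N} \<inter> {n. q j n = q j' m}) \<le> KK N" by simp
      qed
      also have "\<dots> = l * KK N" by simp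
      finally show "card (\<Union>j'\<in>{1..l}. \<Union>m\<in>{..<KK N}. {0..N} \<inter> {n. q j n = q j' m}) \<le> l * KK N" .
    qed
    also have "\<dots> = l * l * KK N" by simp
    finally show ?thesis .
  qed
  have "card (bad N) \<le> card ({..<KK N} \<union> U)"
    using bad_sub[of N] unfolding U_def[symmetric] by (intro card_mono) (auto simp: U_def)
  also have "\<dots> \<le> card {..<KK N} + card U" by (rule card_Un_le)
  finally show ?thesis using cU by simp
qed

lemma KK_ratio: "(\<lambda>N. real (KK N) / real N) \<longlonglongrightarrow> 0"
proof (rule Lim_null_comparison)
  define C where "C = real (nat n0) + 2"
  show "eventually (\<lambda>N. norm (real (KK N) / real N) \<le> real N powr (\<gamma> - 1) + C / real N) sequentially"
    using eventually_gt_at_top[of "0::nat"]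
  proof eventually_elim
    case (elim N)
    have "0 \<le> real N powr \<gamma>" by simp
    then have c0: "0 \<le> \<lceil>real N powr \<gamma>\<rceil>" by linarith
    have "real (nat \<lceil>real N powr \<gamma>\<rceil>) = real_of_int \<lceil>real N powr \<gamma>\<rceil>" by (rule of_nat_nat[OF c0])
    also have "\<dots> \<le> real N powr \<gamma> + 1" by (rule of_int_ceiling_le_add_one)
    finally have c1: "real (nat \<lceil>real N powr \<gamma>\<rceil>) \<le> real N powr \<gamma> + 1" .
    have c2: "real (KK N) = real (nat \<lceil>real N powr \<gamma>\<rceil>) + real (nat n0) + 1" by (simp add: KK_def)
    have "real (KK N) \<le> real N powr \<gamma> + C" using c1 c2 unfolding C_def by linarith
    then have "real (KK N) / real N \<le> (real N powr \<gamma> + C) / real N" using elim by (intro divide_right_mono) auto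
    also have "\<dots> = real N powr \<gamma> / real N + C / real N" by (rule add_divide_distrib)
    also have "real N powr \<gamma> / real N = real N powr (\<gamma> - 1)" using elim by (simp add: powr_diff)
    finally show ?case by simp
  qed
  have "(\<lambda>N. real N powr (\<gamma> - 1)) \<longlonglongrightarrow> 0"
    using gamma by (intro tendsto_neg_powr filterlim_real_sequentially) auto
  from tendsto_add[OF this lim_const_over_n[of C]]
  show "(\<lambda>N. real N powr (\<gamma> - 1) + C / real N) \<longlonglongrightarrow> 0" by simp
qed

lemma bad_ratio: "(\<lambda>N. real (card (bad N)) / real N) \<longlonglongrightarrow> 0"
proof (rule Lim_null_comparison)
  show "eventually (\<lambda>N. norm (real (card (bad N)) / real N) \<le> (1 + real l * real l) * (real (KK N) / real N)) sequentially"
  proof (rule always_eventually, rule allI)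
    fix N
    have "real (card (bad N)) \<le> real (KK N + l * l * KK N)"
      using card_bad[of N] by (simp only: of_nat_le_iff)
    also have "real (KK N + l * l * KK N) = (1 + real l * real l) * real (KK N)" by (simp add: algebra_simps)
    finally have "real (card (bad N)) / real N \<le> (1 + real l * real l) * real (KK N) / real N"
      by (rule divide_right_mono) simp
    then show "norm (real (card (bad N)) / real N) \<le> (1 + real l * real l) * (real (KK N) / real N)"
      by simp
  qed
  show "(\<lambda>N. (1 + real l * real l) * (real (KK N) / real N)) \<longlonglongrightarrow> 0"
    using tendsto_mult_right_zero[OF KK_ratio] by simp
qed

definition Yn :: "nat \<Rightarrow> 'a \<Rightarrow> real" where "Yn n \<omega> = (\<Prod>j\<in>{1..l}. X (q j n) \<omega>)"

lemma Yn_meas[measurable]: "Yn n \<in> borel_measurable M" unfolding Yn_def by measurable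

lemma Yn_eq: "inj_on (\<lambda>j. q j n) {1..l} \<Longrightarrow> Yn n \<omega> = (\<Prod>i\<in>idx n. X i \<omega>)"
  unfolding Yn_def idx_def by (simp add: prod.reindex)

lemma Yn_bound: "\<forall>i. \<bar>X i \<omega>\<bar> \<le> D \<Longrightarrow> \<bar>Yn n \<omega>\<bar> \<le> D ^ l"
proof -
  assume b: "\<forall>i. \<bar>X i \<omega>\<bar> \<le> D"
  have "\<bar>Yn n \<omega>\<bar> = (\<Prod>j\<in>{1..l}. \<bar>X (q j n) \<omega>\<bar>)" by (simp add: Yn_def abs_prod)
  also have "\<dots> \<le> (\<Prod>j\<in>{1..l}. D)" using b by (intro prod_mono) auto
  also have "\<dots> = D ^ l" by simp
  finally show ?thesis .
qed

lemma exp_bdd_int: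
  fixes f :: "'a \<Rightarrow> real" and C t :: real
  assumes f[measurable]: "f \<in> borel_measurable M" and b: "AE \<omega> in M. \<bar>f \<omega>\<bar> \<le> C"
  shows "integrable M (\<lambda>\<omega>. exp (t * f \<omega>))"
proof -
  have "AE \<omega> in M. norm (exp (t * f \<omega>)) \<le> exp (\<bar>t\<bar> * C)"
    using b
  proof eventually_elim
    case (elim \<omega>)
    have "t * f \<omega> \<le> \<bar>t * f \<omega>\<bar>" by (rule abs_ge_self)
    also have "\<dots> = \<bar>t\<bar> * \<bar>f \<omega>\<bar>" by (rule abs_mult)
    also have "\<dots> \<le> \<bar>t\<bar> * C" using elim by (intro mult_left_mono) auto
    finally have "t * f \<omega> \<le> \<bar>t\<bar> * C" .
    then show ?case by simp
  qed
  then show ?thesis by (intro integrable_const_bound) auto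
qed

lemma good_int: "(\<integral>\<omega>. (\<Prod>n\<in>good N. exp (t * Yn n \<omega>)) \<partial>M) = fser l t ^ card (good N)"
proof -
  have ind0: "indep_vars (\<lambda>n. PiM (idx n) (\<lambda>_. borel)) (\<lambda>n \<omega>. restrict (\<lambda>i. X i \<omega>) (idx n)) (good N)"
  proof (rule indep_vars_restrict[OF indep])
    show "disjoint_family_on idx (good N)"
      unfolding disjoint_family_on_def
    proof (intro ballI impI)
      fix m n assume mn: "m \<in> good N" "n \<in> good N" "m \<noteq> n"
      have m: "m \<in> {0..N}" using mn(1) by (simp add: good_def)
      have "\<forall>m\<in>{0..N}. m \<noteq> n \<longrightarrow> idx m \<inter> idx n = {}" using mn(2) by (simp add: good_def)
      then show "idx m \<inter> idx n = {}" using m mn(3) by blast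
    qed
  qed auto
  define hh where "hh n x = exp (t * (\<Prod>j\<in>{1..l}. x (q j n)))" for n and x :: "nat \<Rightarrow> real"
  have hm: "hh n \<in> borel_measurable (PiM (idx n) (\<lambda>_. borel))" for n
    unfolding hh_def idx_def by measurable
  have ind1: "indep_vars (\<lambda>_. borel) (\<lambda>n \<omega>. hh n (restrict (\<lambda>i. X i \<omega>) (idx n))) (good N)"
    by (rule indep_vars_compose2[OF ind0 hm])
  have eqh: "hh n (restrict (\<lambda>i. X i \<omega>) (idx n)) = exp (t * Yn n \<omega>)" for n \<omega>
    unfolding hh_def Yn_def by (simp add: idx_def)
  have ind2: "indep_vars (\<lambda>_. borel) (\<lambda>n \<omega>. exp (t * Yn n \<omega>)) (good N)"
    using ind1 unfolding eqh .
  have eachint: "integrable M (\<lambda>\<omega>. exp (t * Yn n \<omega>))" for n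
  proof (rule exp_bdd_int[where C="D^l"])
    show "AE \<omega> in M. \<bar>Yn n \<omega>\<bar> \<le> D ^ l" using bdd_all by (rule eventually_mono) (rule Yn_bound)
  qed simp
  have "(\<integral>\<omega>. (\<Prod>n\<in>good N. exp (t * Yn n \<omega>)) \<partial>M) = (\<Prod>n\<in>good N. \<integral>\<omega>. exp (t * Yn n \<omega>) \<partial>M)"
    by (rule indep_vars_lebesgue_integral[OF _ ind2 eachint]) (simp add: good_def)
  also have "\<dots> = (\<Prod>n\<in>good N. fser l t)"
  proof (rule prod.cong[OF refl])
    fix n assume n: "n \<in> good N"
    then have inj: "inj_on (\<lambda>j. q j n) {1..l}" by (simp add: good_def)
    have ci: "card (idx n) = l" unfolding idx_def using card_image[OF inj] by simp
    have "(\<integral>\<omega>. exp (t * Yn n \<omega>) \<partial>M) = (\<integral>\<omega>. exp (t * (\<Prod>i\<in>idx n. X i \<omega>)) \<partial>M)"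
      by (simp add: Yn_eq[OF inj])
    also have "\<dots> = fser (card (idx n)) t" by (rule series_lemma) (simp add: idx_def)
    finally show "(\<integral>\<omega>. exp (t * Yn n \<omega>) \<partial>M) = fser l t" using ci by simp
  qed
  also have "\<dots> = fser l t ^ card (good N)" by simp
  finally show ?thesis .
qed

lemma S_split: "S_sum q l X N \<omega> = (\<Sum>n\<in>good N. Yn n \<omega>) + (\<Sum>n\<in>bad N. Yn n \<omega>)"
proof -
  have "good N \<subseteq> {0..N}" by (auto simp: good_def)
  then have "(\<Sum>n\<in>{0..N}. Yn n \<omega>) = (\<Sum>n\<in>{0..N} - good N. Yn n \<omega>) + (\<Sum>n\<in>good N. Yn n \<omega>)"
    by (intro sum.subset_diff) auto
  moreover have "S_sum q l X N \<omega> = (\<Sum>n\<in>{0..N}. Yn n \<omega>)" by (simp add: S_sum_def Yn_def)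
  ultimately show ?thesis by (simp add: bad_def)
qed

lemma S_meas[measurable]: "S_sum q l X N \<in> borel_measurable M"
  unfolding S_sum_def by measurable

lemma S_int: "integrable M (\<lambda>\<omega>. exp (t * S_sum q l X N \<omega>))"
proof (rule exp_bdd_int[where C="real (Suc N) * D ^ l"])
  show "AE \<omega> in M. \<bar>S_sum q l X N \<omega>\<bar> \<le> real (Suc N) * D ^ l"
    using bdd_all
  proof eventually_elim
    case (elim \<omega>)
    have "\<bar>S_sum q l X N \<omega>\<bar> \<le> (\<Sum>n\<in>{0..N}. \<bar>Yn n \<omega>\<bar>)" unfolding S_sum_def Yn_def[symmetric]
      by (rule sum_abs)
    also have "\<dots> \<le> (\<Sum>n\<in>{0..N}. D ^ l)" using elim by (intro sum_mono Yn_bound) auto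
    also have "\<dots> = real (Suc N) * D ^ l" by simp
    finally show ?case .
  qed
qed simp

lemma mgf_bounds:
  fixes N :: nat and t :: real
  defines "c \<equiv> \<bar>t\<bar> * (real (card (bad N)) * D ^ l)"
  shows "exp (- c) * fser l t ^ card (good N) \<le> mgf_S M q l X N t"
    and "mgf_S M q l X N t \<le> exp c * fser l t ^ card (good N)"
proof -
  define A where "A \<omega> = (\<Sum>n\<in>good N. Yn n \<omega>)" for \<omega>
  define B where "B \<omega> = (\<Sum>n\<in>bad N. Yn n \<omega>)" for \<omega>
  have Am[measurable]: "A \<in> borel_measurable M" unfolding A_def by measurable
  have fin: "finite (good N)" "finite (bad N)" by (auto simp: good_def bad_def)
  have Bb: "AE \<omega> in M. \<bar>t * B \<omega>\<bar> \<le> c"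
    using bdd_all
  proof eventually_elim
    case (elim \<omega>)
    have "\<bar>B \<omega>\<bar> \<le> (\<Sum>n\<in>bad N. \<bar>Yn n \<omega>\<bar>)" unfolding B_def by (rule sum_abs)
    also have "\<dots> \<le> (\<Sum>n\<in>bad N. D ^ l)" using elim by (intro sum_mono Yn_bound) auto
    also have "\<dots> = real (card (bad N)) * D ^ l" by simp
    finally show ?case unfolding c_def by (simp add: abs_mult mult_left_mono)
  qed
  have eA: "exp (t * A \<omega>) = (\<Prod>n\<in>good N. exp (t * Yn n \<omega>))" for \<omega>
    unfolding A_def by (simp add: sum_distrib_left exp_sum fin)
  have intA: "(\<integral>\<omega>. exp (t * A \<omega>) \<partial>M) = fser l t ^ card (good N)"
    unfolding eA by (rule good_int)
  have iA: "integrable M (\<lambda>\<omega>. exp (t * A \<omega>))"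
  proof (rule exp_bdd_int[where C="real (card (good N)) * D ^ l"])
    show "AE \<omega> in M. \<bar>A \<omega>\<bar> \<le> real (card (good N)) * D ^ l"
      using bdd_all
    proof eventually_elim
      case (elim \<omega>)
      have "\<bar>A \<omega>\<bar> \<le> (\<Sum>n\<in>good N. \<bar>Yn n \<omega>\<bar>)" unfolding A_def by (rule sum_abs)
      also have "\<dots> \<le> (\<Sum>n\<in>good N. D ^ l)" using elim by (intro sum_mono Yn_bound) auto
      also have "\<dots> = real (card (good N)) * D ^ l" by simp
      finally show ?case .
    qed
  qed simp
  have eS: "exp (t * S_sum q l X N \<omega>) = exp (t * A \<omega>) * exp (t * B \<omega>)" for \<omega>
    by (simp add: S_split A_def[symmetric] B_def[symmetric] distrib_left exp_add)
  show "exp (- c) * fser l t ^ card (good N) \<le> mgf_S M q l X N t"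
  proof -
    have "exp (- c) * fser l t ^ card (good N) = (\<integral>\<omega>. exp (- c) * exp (t * A \<omega>) \<partial>M)"
      by (simp add: intA)
    also have "\<dots> \<le> (\<integral>\<omega>. exp (t * S_sum q l X N \<omega>) \<partial>M)"
    proof (rule integral_mono_AE)
      show "integrable M (\<lambda>\<omega>. exp (- c) * exp (t * A \<omega>))" using iA by simp
      show "integrable M (\<lambda>\<omega>. exp (t * S_sum q l X N \<omega>))" by (rule S_int)
      show "AE \<omega> in M. exp (- c) * exp (t * A \<omega>) \<le> exp (t * S_sum q l X N \<omega>)"
        using Bb
      proof eventually_elim
        case (elim \<omega>)
        then have "exp (- c) \<le> exp (t * B \<omega>)" by simp
        then have "exp (- c) * exp (t * A \<omega>) \<le> exp (t * B \<omega>) * exp (t * A \<omega>)" by simp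
        then show ?case by (simp add: eS mult.commute)
      qed
    qed
    finally show ?thesis by (simp add: mgf_S_def)
  qed
  show "mgf_S M q l X N t \<le> exp c * fser l t ^ card (good N)"
  proof -
    have "(\<integral>\<omega>. exp (t * S_sum q l X N \<omega>) \<partial>M) \<le> (\<integral>\<omega>. exp c * exp (t * A \<omega>) \<partial>M)"
    proof (rule integral_mono_AE)
      show "integrable M (\<lambda>\<omega>. exp c * exp (t * A \<omega>))" using iA by simp
      show "integrable M (\<lambda>\<omega>. exp (t * S_sum q l X N \<omega>))" by (rule S_int)
      show "AE \<omega> in M. exp (t * S_sum q l X N \<omega>) \<le> exp c * exp (t * A \<omega>)"
        using Bb
      proof eventually_elim
        case (elim \<omega>)
        then have "exp (t * B \<omega>) \<le> exp c" by simp
        then have "exp (t * B \<omega>) * exp (t * A \<omega>) \<le> exp c * exp (t * A \<omega>)" by simp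
        then show ?case by (simp add: eS mult.commute)
      qed
    qed
    also have "\<dots> = exp c * fser l t ^ card (good N)" by (simp add: intA)
    finally show ?thesis by (simp add: mgf_S_def)
  qed
qed

lemma card_good_bad: "real (card (good N)) + real (card (bad N)) = real N + 1"
proof -
  have sub: "good N \<subseteq> {0..N}" by (auto simp: good_def)
  have "card (bad N) = card {0..N} - card (good N)" unfolding bad_def
    using sub by (intro card_Diff_subset) (auto intro: finite_subset)
  moreover have "card (good N) \<le> card {0..N}" using sub by (intro card_mono) auto
  ultimately have "card (good N) + card (bad N) = N + 1" by simp
  then show ?thesis by (metis of_nat_1 of_nat_add)
qed

lemma mgf_lim: "(\<lambda>N. ln (mgf_S M q l X N t) / real N) \<longlonglongrightarrow> ln (fser l t)"
proof -
  define F where "F = fser l t"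
  define L where "L = ln F"
  have F: "F > 0" using fser_pos by (simp add: F_def)
  define bnd where "bnd N = (\<bar>t\<bar> * D ^ l + \<bar>L\<bar>) * (real (card (bad N)) / real N) + \<bar>L\<bar> / real N" for N
  have "(\<lambda>N. ln (mgf_S M q l X N t) / real N - L) \<longlonglongrightarrow> 0"
  proof (rule Lim_null_comparison)
    show "eventually (\<lambda>N. norm (ln (mgf_S M q l X N t) / real N - L) \<le> bnd N) sequentially"
      using eventually_gt_at_top[of "0::nat"]
    proof eventually_elim
      case (elim N)
      define g where "g = real (card (good N))"
      define b where "b = real (card (bad N))"
      define c where "c = \<bar>t\<bar> * (b * D ^ l)"
      define m where "m = mgf_S M q l X N t"
      have gb: "g + b = real N + 1" using card_good_bad[of N] by (simp add: g_def b_def)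
      have lo: "exp (- c) * F ^ card (good N) \<le> m" using mgf_bounds(1)[where N=N and t=t] by (simp add: c_def b_def F_def m_def)
      have up: "m \<le> exp c * F ^ card (good N)" using mgf_bounds(2)[where N=N and t=t] by (simp add: c_def b_def F_def m_def)
      have pos: "0 < exp (- c) * F ^ card (good N)" using F by simp
      have lnF: "ln (F ^ card (good N)) = g * L" using F by (simp add: ln_realpow g_def L_def)
      have "ln (exp (- c) * F ^ card (good N)) \<le> ln m" using lo pos by (intro ln_mono) auto
      then have l1: "- c + g * L \<le> ln m" using F lnF by (simp add: ln_mult)
      have "ln m \<le> ln (exp c * F ^ card (good N))" using up lo pos by (intro ln_mono) auto
      then have l2: "ln m \<le> c + g * L" using F lnF by (simp add: ln_mult)
      have N0: "real N > 0" using elim by simp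
      have eq: "ln m / real N - L = (ln m - g * L + (1 - b) * L) / real N"
      proof -
        have "L * (b + g) = L * (real N + 1)" using gb by simp
        then have h: "L * b + L * g = L + L * real N" by (simp add: algebra_simps)
        show ?thesis using N0 h by (simp add: field_simps)
      qed
      have "\<bar>ln m - g * L + (1 - b) * L\<bar> \<le> \<bar>ln m - g * L\<bar> + \<bar>(1 - b) * L\<bar>" by (rule abs_triangle_ineq)
      also have "\<bar>ln m - g * L\<bar> \<le> c" using l1 l2 by linarith
      also have "\<bar>(1 - b) * L\<bar> \<le> (1 + b) * \<bar>L\<bar>"
      proof -
        have b0: "0 \<le> b" by (simp add: b_def)
        have "\<bar>1 - b\<bar> \<le> 1 + b" using b0 by linarith
        then show ?thesis by (simp add: abs_mult mult_right_mono)
      qed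
      finally have num: "\<bar>ln m - g * L + (1 - b) * L\<bar> \<le> c + (1 + b) * \<bar>L\<bar>" by simp
      have "\<bar>ln m / real N - L\<bar> = \<bar>ln m - g * L + (1 - b) * L\<bar> / real N" using eq N0 by simp
      also have "\<dots> \<le> (c + (1 + b) * \<bar>L\<bar>) / real N" using num N0 by (intro divide_right_mono) auto
      also have "\<dots> = bnd N" unfolding bnd_def c_def b_def using N0 by (simp add: field_simps)
      finally show ?case by (simp add: m_def)
    qed
    have "(\<lambda>N. (\<bar>t\<bar> * D ^ l + \<bar>L\<bar>) * (real (card (bad N)) / real N)) \<longlonglongrightarrow> 0"
      using tendsto_mult_right_zero[OF bad_ratio] by simp
    from tendsto_add[OF this lim_const_over_n[of "\<bar>L\<bar>"]]
    show "bnd \<longlonglongrightarrow> 0" by (simp add: bnd_def[abs_def])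
  qed
  then show ?thesis unfolding L_def F_def by (rule LIM_zero_cancel)
qed

end


theorem mainTheorem15:
  fixes M :: "'a measure" and X :: "nat \<Rightarrow> 'a \<Rightarrow> real" and D :: real
    and q :: "nat \<Rightarrow> nat \<Rightarrow> nat" and l :: nat and \<gamma> :: real and n0 :: int
  assumes "prob_space M"
    and rv: "\<And>n. X n \<in> borel_measurable M"
    and indep: "prob_space.indep_vars M (\<lambda>_. borel) X UNIV"
    and ident: "\<And>n. distr M borel (X n) = distr M borel (X 0)"
    and bdd: "AE \<omega> in M. \<bar>X 0 \<omega>\<bar> \<le> D"
    and l_pos: "l \<ge> 1"
    and q_mono: "\<And>j. j \<in> {1..l} \<Longrightarrow> strict_mono (q j)"
    and gamma: "0 < \<gamma>" "\<gamma> < 1"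
    and q_sep: "\<And>n j. int n \<ge> n0 \<Longrightarrow> j \<in> {1..<l} \<Longrightarrow>
                   q (Suc j) (nat \<lfloor>real n powr \<gamma>\<rfloor>) > q j n"
  shows "(\<forall>t. (\<lambda>N. ln (mgf_S M q l X N t) / real N) \<longlonglongrightarrow> eta_fun M X l t)
       \<and> (\<forall>t. eta_fun M X l differentiable (at t))
       \<and> (\<forall>F. closed F \<longrightarrow>
            limsup (\<lambda>N. Q_fun M (S_sum q l X) N F)
              \<le> - (INF x\<in>F. Lambda_fun (eta_fun M X l) x))
       \<and> (\<forall>G. open G \<longrightarrow>
            liminf (\<lambda>N. Q_fun M (S_sum q l X) N G)
              \<ge> - (INF x\<in>G. Lambda_fun (eta_fun M X l) x))"
proof -
  interpret nc: nc_q M X D q l \<gamma> n0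
  proof (intro nc_q.intro nc_setting.intro nc_q_axioms.intro nc_setting_axioms.intro)
    show "prob_space M" by fact
  qed (use assms in auto)
  have lim: "(\<lambda>N. ln (mgf_S M q l X N t) / real N) \<longlonglongrightarrow> eta_fun M X l t" for t
    using nc.mgf_lim[of t] by (simp add: nc.eta_eq)
  interpret L: ldp_setting M "S_sum q l X" "eta_fun M X l"
  proof (intro ldp_setting.intro ldp_setting_axioms.intro)
    show "prob_space M" by fact
    show "S_sum q l X N \<in> borel_measurable M" for N by (rule nc.S_meas)
    show "integrable M (\<lambda>\<omega>. exp (t * S_sum q l X N \<omega>))" for N t by (rule nc.S_int)
    show "(\<lambda>N. ln (\<integral>\<omega>. exp (t * S_sum q l X N \<omega>) \<partial>M) / real N) \<longlonglongrightarrow> eta_fun M X l t" for t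
      using lim[of t] by (simp add: mgf_S_def)
  qed
  have jen: "t * nc.mom 1 ^ l \<le> eta_fun M X l t" for t
  proof -
    have "t * nc.mom 1 ^ l = ln (exp (t * nc.mom 1 ^ l))" by simp
    also have "\<dots> \<le> ln (nc.fser l t)" using nc.fser_jensen[of t l] by (intro ln_mono) auto
    finally show ?thesis by (simp add: nc.eta_eq)
  qed
  show ?thesis
  proof (intro conjI allI impI)
    show "(\<lambda>N. ln (mgf_S M q l X N t) / real N) \<longlonglongrightarrow> eta_fun M X l t" for t by (rule lim)
    show "eta_fun M X l differentiable (at t)" for t by (rule nc.eta_diff)
    show "limsup (\<lambda>N. Q_fun M (S_sum q l X) N F) \<le> - (INF x\<in>F. Lambda_fun (eta_fun M X l) x)"
      if "closed F" for F by (rule L.upper_bound[OF jen that])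
    show "- (INF x\<in>G. Lambda_fun (eta_fun M X l) x) \<le> liminf (\<lambda>N. Q_fun M (S_sum q l X) N G)"
      if "open G" for G by (rule L.lower_bound[OF nc.eta_diff that])
  qed
qed

end
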